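(* Let $q\ge 2$ and $n\ge 2$ be integers and let $m=n-1$. Under uniform transmission over the $1$-deletion channel with input length $n$, $$\max_{{\boldsymbol y}\in\Sigma_q^{m}} \mathsf{H}^{\mathsf{In}}_{1\text{-}\mathsf{Del}}({\boldsymbol y}) = \log_2(nq)-\frac{2m}{nq},$$ and this maximum is attained only by channel outputs ${\boldsymbol y}$ with $\rho({\boldsymbol y})=m$ runs (i.e., all runs of length one).
   Context: $\Sigma_q=\{0,1,\dots,q-1\}$. For sequences ${\boldsymbol x}$ of length $N$ and ${\boldsymbol y}$ of length $\ell\le N$, the embedding number $\omega_{{\boldsymbol y}}({\boldsymbol x})$ is the number of index tuples $1\le i_1<\dots<i_\ell\le N$ with $x_{i_j}=y_j$ for all $j$. The $k$-deletion channel with input length $n$ maps ${\boldsymbol x}\in\Sigma_q^n$ to ${\boldsymbol y}\in\Sigma_q^{n-k}$ with probability $\Pr\{{\boldsymbol y}\mid{\boldsymbol x}\}=\omega_{{\boldsymbol y}}({\boldsymbol x})/\binom{n}{k}$ (exactly $k$ positions, chosen uniformly among the $\binom nk$ subsets, are deleted). Under uniform transmission, the input $X$ is uniform on $\Sigma_q^n$, and for an output ${\boldsymbol y}$ the input entropy is $\mathsf{H}^{\mathsf{In}}_{k\text{-}\mathsf{Del}}({\boldsymbol y})=H(X\mid Y={\boldsymbol y})=-\sum_{{\boldsymbol x}}P({\boldsymbol x}\mid{\boldsymbol y})\log_2 P({\boldsymbol x}\mid{\boldsymbol y})$ where $P({\boldsymbol x}\mid {\boldsymbol y})=\Pr\{{\boldsymbol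 y}\mid{\boldsymbol x}\}/\sum_{{\boldsymbol x}'\in\Sigma_q^n}\Pr\{{\boldsymbol y}\mid{\boldsymbol x}'\}$. A run of a sequence is a maximal block of identical consecutive symbols; $\rho({\boldsymbol y})$ is the number of runs of ${\boldsymbol y}$. *)

theory Defs
  imports Complex_Main
begin

definition seqs :: "nat \<Rightarrow> nat \<Rightarrow> nat list set" where
  "seqs q n = {xs. length xs = n \<and> set xs \<subseteq> {..<q}}"

definition emb :: "nat list \<Rightarrow> nat list \<Rightarrow> nat" where
  "emb y x = card {I. I \<subseteq> {..<length x} \<and> card I = length y \<and> nths x I = y}"

definition del_prob :: "nat \<Rightarrow> nat \<Rightarrow> nat list \<Rightarrow> nat list \<Rightarrow> real" where
  "del_prob n k y x = real (emb y x) / real (n choose k)"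

definition posterior :: "nat \<Rightarrow> nat \<Rightarrow> nat \<Rightarrow> nat list \<Rightarrow> nat list \<Rightarrow> real" where
  "posterior q n k y x = del_prob n k y x / (\<Sum>x'\<in>seqs q n. del_prob n k y x')"

definition input_entropy :: "nat \<Rightarrow> nat \<Rightarrow> nat \<Rightarrow> nat list \<Rightarrow> real" where
  "input_entropy q n k y =
     - (\<Sum>x\<in>seqs q n. (if posterior q n k y x = 0 then 0
                        else posterior q n k y x * log 2 (posterior q n k y x)))"

definition runs :: "nat list \<Rightarrow> nat" where
  "runs y = length (remdups_adj y)"

end

theory Submission
  imports Defs
begin

definition dl :: "nat \<Rightarrow> 'a list \<Rightarrow> 'a list" where
  "dl j x = take j x @ drop (Suc j) x"
definition ins :: "nat \<Rightarrow> 'a \<Rightarrow> 'a list \<Rightarrow> 'a list" where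
  "ins i a y = take i y @ a # drop i y"

lemma length_dl: "j < length x \<Longrightarrow> length (dl j x) = length x - 1"
  by (simp add: dl_def)

lemma nth_dl: "j < length x \<Longrightarrow> p < length x - 1 \<Longrightarrow>
   dl j x ! p = (if p < j then x ! p else x ! Suc p)"
  by (auto simp: dl_def nth_append min_def add.commute)

lemma length_ins: "i \<le> length y \<Longrightarrow> length (ins i a y) = Suc (length y)"
  by (simp add: ins_def)

lemma nth_ins: "i \<le> length y \<Longrightarrow> p \<le> length y \<Longrightarrow>
   ins i a y ! p = (if p < i then y ! p else if p = i then a else y ! (p - 1))"
proof -
  assume a: "i \<le> length y" "p \<le> length y"
  show ?thesis
  proof (cases "p \<le> i")
    case True then show ?thesis using a by (auto simp: ins_def nth_append min_def)
  next
    case False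
    then obtain r where r: "p = Suc (i + r)" by (metis add_Suc_right less_imp_Suc_add not_le)
    then show ?thesis using a by (auto simp: ins_def nth_append min_def)
  qed
qed

lemma dl_ins: "i \<le> length y \<Longrightarrow> dl i (ins i a y) = y"
  by (simp add: dl_def ins_def)

lemma ins_dl: "j < length x \<Longrightarrow> ins j (x ! j) (dl j x) = x"
  by (simp add: dl_def ins_def id_take_nth_drop[symmetric] min_def)

lemma set_ins: "set (ins i a y) \<subseteq> insert a (set y)"
  unfolding ins_def using set_take_subset set_drop_subset by fastforce

lemma set_dl: "set (dl i y) \<subseteq> set y"
  unfolding dl_def using set_take_subset set_drop_subset by fastforce

lemma nths_compl: "j < length x \<Longrightarrow> nths x ({..<length x} - {j}) = dl j x"
proof -
  assume j: "j < length x"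
  have x: "x = take j x @ x ! j # drop (Suc j) x" using j by (simp add: id_take_nth_drop)
  have "nths x ({..<length x} - {j}) = nths (take j x @ x ! j # drop (Suc j) x) ({..<length x} - {j})"
    using x by simp
  also have "\<dots> = take j x @ drop (Suc j) x"
  proof -
    have "nths (drop (Suc j) x) {ja. Suc (ja + j) < length x} = drop (Suc j) x"
      by (rule nths_all) auto
    then show ?thesis using j by (simp add: nths_append nths_Cons nths_all min_def)
  qed
  finally show ?thesis by (simp add: dl_def)
qed

lemma dl_eq_imp: "j < k \<Longrightarrow> k < length x \<Longrightarrow> dl j x = dl k x \<Longrightarrow> j \<le> p \<Longrightarrow> p < k \<Longrightarrow> x ! p = x ! Suc p"
proof -
  assume a: "j < k" "k < length x" "dl j x = dl k x" "j \<le> p" "p < k"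
  have "dl j x ! p = x ! Suc p" using a(1,2,4,5) by (simp add: nth_dl)
  moreover have "dl k x ! p = x ! p" using a(1,2,4,5) by (simp add: nth_dl)
  ultimately show ?thesis using a(3) by simp
qed

lemma dl_eq_if: "j \<le> k \<Longrightarrow> k < length x \<Longrightarrow> (\<forall>p. j \<le> p \<and> p < k \<longrightarrow> x ! p = x ! Suc p) \<Longrightarrow> dl j x = dl k x"
  by (rule nth_equalityI) (auto simp: length_dl nth_dl)


definition JJ :: "nat list \<Rightarrow> nat list \<Rightarrow> nat set" where
  "JJ y x = {j. j < length x \<and> dl j x = y}"

definition KK :: "nat list \<Rightarrow> nat list \<Rightarrow> nat set" where
  "KK y x = {j. Suc j < length x \<and> dl j x = y \<and> x ! j = x ! Suc j}"

lemma emb_eq: assumes "length x = Suc (length y)" shows "emb y x = card (JJ y x)"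
proof -
  let ?N = "length x"
  have "{I. I \<subseteq> {..<?N} \<and> card I = length y \<and> nths x I = y} = (\<lambda>j. {..<?N} - {j}) ` JJ y x"
  proof (intro equalityI subsetI)
    fix I assume "I \<in> {I. I \<subseteq> {..<?N} \<and> card I = length y \<and> nths x I = y}"
    then have I: "I \<subseteq> {..<?N}" "card I = length y" "nths x I = y" by auto
    have "card ({..<?N} - I) = 1" using I assms by (simp add: card_Diff_subset finite_subset)
    then obtain j where j: "{..<?N} - I = {j}" by (auto simp: card_1_singleton_iff)
    then have jN: "j < ?N" by auto
    have "I = {..<?N} - {j}" using j I(1) by auto
    moreover then have "dl j x = y" using I(3) jN nths_compl by metis
    ultimately show "I \<in> (\<lambda>j. {..<?N} - {j}) ` JJ y x" using jN by (auto simp: JJ_def)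
  next
    fix I assume "I \<in> (\<lambda>j. {..<?N} - {j}) ` JJ y x"
    then obtain j where j: "j < ?N" "dl j x = y" "I = {..<?N} - {j}" by (auto simp: JJ_def)
    then show "I \<in> {I. I \<subseteq> {..<?N} \<and> card I = length y \<and> nths x I = y}"
      using assms nths_compl[of j x] by auto
  qed
  moreover have "inj_on (\<lambda>j. {..<?N} - {j}) (JJ y x)"
    by (rule inj_onI) (auto simp: JJ_def)
  ultimately show ?thesis unfolding emb_def by (simp add: card_image)
qed

lemma JJ_interval: assumes "JJ y x \<noteq> {}" shows "JJ y x = {Min (JJ y x)..Max (JJ y x)}"
proof -
  let ?J = "JJ y x"
  have fin: "finite ?J" by (auto simp: JJ_def)
  let ?a = "Min ?J" and ?b = "Max ?J"
  have a: "?a \<in> ?J" and b: "?b \<in> ?J" using fin assms by auto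
  have sub: "?J \<subseteq> {?a..?b}" using fin by auto
  have "l \<in> ?J" if l: "?a \<le> l" "l \<le> ?b" for l
  proof -
    have bx: "?b < length x" "dl ?b x = y" and ax: "dl ?a x = y" using a b by (auto simp: JJ_def)
    have eq: "\<forall>p. ?a \<le> p \<and> p < ?b \<longrightarrow> x ! p = x ! Suc p"
    proof (cases "?a < ?b")
      case True then show ?thesis using dl_eq_imp[of ?a ?b x] bx ax by auto
    qed auto
    have "dl ?a x = dl l x" by (rule dl_eq_if) (use l bx eq in auto)
    then show ?thesis using ax l bx by (auto simp: JJ_def)
  qed
  then show ?thesis using sub by auto
qed

lemma KK_JJ: "KK y x = {j \<in> JJ y x. Suc j \<in> JJ y x}"
proof (intro equalityI subsetI)
  fix j assume "j \<in> KK y x"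
  then have j: "Suc j < length x" "dl j x = y" "x ! j = x ! Suc j" by (auto simp: KK_def)
  have "\<forall>p. j \<le> p \<and> p < Suc j \<longrightarrow> x ! p = x ! Suc p"
  proof (intro allI impI)
    fix p assume "j \<le> p \<and> p < Suc j"
    then have "p = j" by auto
    then show "x ! p = x ! Suc p" using j(3) by simp
  qed
  then have "dl j x = dl (Suc j) x" by (intro dl_eq_if) (use j in auto)
  then show "j \<in> {j \<in> JJ y x. Suc j \<in> JJ y x}" using j by (auto simp: JJ_def)
next
  fix j assume "j \<in> {j \<in> JJ y x. Suc j \<in> JJ y x}"
  then have j: "Suc j < length x" "dl j x = y" "dl (Suc j) x = y" by (auto simp: JJ_def)
  then have "x ! j = x ! Suc j" using dl_eq_imp[of j "Suc j" x j] by auto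
  then show "j \<in> KK y x" using j by (auto simp: KK_def)
qed

lemma card_KK: "card (KK y x) = card (JJ y x) - 1"
proof (cases "JJ y x = {}")
  case True then show ?thesis by (simp add: KK_JJ)
next
  case False
  let ?a = "Min (JJ y x)" and ?b = "Max (JJ y x)"
  have J: "JJ y x = {?a..?b}" using JJ_interval[OF False] .
  have "KK y x = {j \<in> {?a..?b}. Suc j \<in> {?a..?b}}" unfolding KK_JJ by (simp only: J[symmetric])
  also have "\<dots> = {?a..<?b}" by auto
  finally have "KK y x = {?a..<?b}" .
  moreover have "card (JJ y x) = Suc ?b - ?a" by (subst J) simp
  ultimately show ?thesis by simp
qed


lemma finite_seqs: "finite (seqs q n)"
proof -
  have "seqs q n = {xs. set xs \<subseteq> {..<q} \<and> length xs = n}" by (auto simp: seqs_def)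
  then show ?thesis using finite_lists_length_eq[of "{..<q}" n] by simp
qed

lemma sum_JJ: assumes y: "y \<in> seqs q m"
  shows "(\<Sum>x\<in>seqs q (Suc m). card (JJ y x)) = Suc m * q"
proof -
  have ly: "length y = m" and sy: "set y \<subseteq> {..<q}" using y by (auto simp: seqs_def)
  have fin: "\<forall>x\<in>seqs q (Suc m). finite (JJ y x)" by (auto simp: JJ_def)
  have "(SIGMA x:seqs q (Suc m). JJ y x) = (\<lambda>(j,a). (ins j a y, j)) ` ({..<Suc m} \<times> {..<q})"
  proof (intro equalityI subsetI)
    fix p assume "p \<in> (SIGMA x:seqs q (Suc m). JJ y x)"
    then obtain x j where p: "p = (x, j)" "x \<in> seqs q (Suc m)" "j < length x" "dl j x = y"
      by (auto simp: JJ_def)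
    have lx: "length x = Suc m" using p by (auto simp: seqs_def)
    have "x ! j \<in> set x" using p by simp
    then have "x ! j < q" using p(2) by (auto simp: seqs_def)
    moreover have "x = ins j (x ! j) y" using ins_dl[of j x] p by simp
    ultimately show "p \<in> (\<lambda>(j,a). (ins j a y, j)) ` ({..<Suc m} \<times> {..<q})"
      using p lx by force
  next
    fix p assume "p \<in> (\<lambda>(j,a). (ins j a y, j)) ` ({..<Suc m} \<times> {..<q})"
    then obtain j a where p: "p = (ins j a y, j)" "j < Suc m" "a < q" by auto
    have "set (ins j a y) \<subseteq> {..<q}" using set_ins[of j a y] sy p by auto
    moreover have "length (ins j a y) = Suc m" using p ly by (simp add: length_ins)
    moreover have "dl j (ins j a y) = y" using p ly by (simp add: dl_ins)
    ultimately show "p \<in> (SIGMA x:seqs q (Suc m). JJ y x)" using p by (auto simp: seqs_def JJ_def)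
  qed
  moreover have "inj_on (\<lambda>(j,a). (ins j a y, j)) ({..<Suc m} \<times> {..<q})"
  proof (rule inj_onI, clarsimp)
    fix j a b assume jm: "j < Suc m" and eq: "ins j a y = ins j b y"
    have "a = ins j a y ! j" using nth_ins[of j y j a] ly jm by simp
    also have "\<dots> = ins j b y ! j" using eq by simp
    also have "\<dots> = b" using nth_ins[of j y j b] ly jm by simp
    finally show "a = b" .
  qed
  ultimately have "card (SIGMA x:seqs q (Suc m). JJ y x) = Suc m * q"
    by (simp add: card_image card_cartesian_product)
  then show ?thesis using fin finite_seqs by simp
qed

lemma sum_KK: assumes y: "y \<in> seqs q m"
  shows "(\<Sum>x\<in>seqs q (Suc m). card (KK y x)) = m"
proof -
  have ly: "length y = m" and sy: "set y \<subseteq> {..<q}" using y by (auto simp: seqs_def)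
  have fin: "\<forall>x\<in>seqs q (Suc m). finite (KK y x)"
  proof
    fix x show "finite (KK y x)" by (rule finite_subset[of _ "{..<length x}"]) (auto simp: KK_def)
  qed
  have "(SIGMA x:seqs q (Suc m). KK y x) = (\<lambda>j. (ins j (y ! j) y, j)) ` {..<m}"
  proof (intro equalityI subsetI)
    fix p assume "p \<in> (SIGMA x:seqs q (Suc m). KK y x)"
    then obtain x j where p: "p = (x, j)" "x \<in> seqs q (Suc m)" "Suc j < length x" "dl j x = y"
       "x ! j = x ! Suc j"
      by (auto simp: KK_def)
    have lx: "length x = Suc m" using p by (auto simp: seqs_def)
    have "y ! j = x ! Suc j" using p(3,4) nth_dl[of j x j] lx by auto
    then have "x = ins j (y ! j) y" using ins_dl[of j x] p by simp
    then show "p \<in> (\<lambda>j. (ins j (y ! j) y, j)) ` {..<m}" using p lx by force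
  next
    fix p assume "p \<in> (\<lambda>j. (ins j (y ! j) y, j)) ` {..<m}"
    then obtain j where p: "p = (ins j (y ! j) y, j)" "j < m" by auto
    have "y ! j \<in> set y" using p ly by simp
    then have "set (ins j (y ! j) y) \<subseteq> {..<q}" using set_ins[of j "y ! j" y] sy p by auto
    moreover have "length (ins j (y ! j) y) = Suc m" using p ly by (simp add: length_ins)
    moreover have "dl j (ins j (y ! j) y) = y" using p ly by (simp add: dl_ins)
    moreover have "ins j (y ! j) y ! j = ins j (y ! j) y ! Suc j"
      using nth_ins[of j y j "y ! j"] nth_ins[of j y "Suc j" "y ! j"] p ly by simp
    ultimately show "p \<in> (SIGMA x:seqs q (Suc m). KK y x)" using p by (auto simp: seqs_def KK_def)
  qed
  moreover have "inj_on (\<lambda>j. (ins j (y ! j) y, j)) {..<m}" by (rule inj_onI) auto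
  ultimately have "card (SIGMA x:seqs q (Suc m). KK y x) = m"
    by (simp add: card_image)
  then show ?thesis using fin finite_seqs by simp
qed


lemma elog_strict: assumes "3 \<le> e" shows "2 * real (e - 1) < real e * log 2 (real e)"
proof (cases "e = 3")
  case True
  have "log 2 (27::real) = log 2 (3 ^ 3)" by simp
  also have "\<dots> = 3 * log 2 3" by (subst log_nat_power) auto
  finally have l27: "log 2 (27::real) = 3 * log 2 3" .
  have "(4::real) = log 2 16"
  proof -
    have "log 2 (16::real) = log 2 (2 ^ 4)" by simp
    also have "\<dots> = 4" by (subst log_nat_power) auto
    finally show ?thesis by simp
  qed
  also have "log 2 (16::real) < log 2 27" by simp
  finally show ?thesis using True l27 by simp
next
  case False
  then have e4: "4 \<le> e" using assms by simp
  have "log 2 (4::real) = 2"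
  proof -
    have "log 2 (4::real) = log 2 (2 ^ 2)" by simp
    also have "\<dots> = 2" by (subst log_nat_power) auto
    finally show ?thesis .
  qed
  moreover have "log 2 (4::real) \<le> log 2 (real e)" using e4 by simp
  ultimately have "2 \<le> log 2 (real e)" by simp
  then have "real e * 2 \<le> real e * log 2 (real e)" by (simp add: mult_left_mono)
  moreover have "2 * real (e - 1) = 2 * real e - 2" using e4 by (simp add: of_nat_diff)
  ultimately show ?thesis by linarith
qed

lemma elog_small: assumes "e \<le> 2" shows "2 * real (e - 1) = real e * log 2 (real e)"
proof -
  have "e = 0 \<or> e = 1 \<or> e = 2" using assms by auto
  then show ?thesis by auto
qed

lemma elog: "2 * real (e - 1) \<le> real e * log 2 (real e)"
  using elog_strict[of e] elog_small[of e] by (cases "e \<le> 2") auto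

lemma remdups_adj_noadj: "(\<forall>k. Suc k < length y \<longrightarrow> y ! k \<noteq> y ! Suc k) \<Longrightarrow> remdups_adj y = y"
proof (induction y rule: remdups_adj.induct)
  case (3 x z xs)
  have "\<forall>k. Suc k < length (z # xs) \<longrightarrow> (z # xs) ! k \<noteq> (z # xs) ! Suc k"
  proof (intro allI impI)
    fix k assume "Suc k < length (z # xs)"
    then show "(z # xs) ! k \<noteq> (z # xs) ! Suc k" using "3.prems"[rule_format, of "Suc k"] by simp
  qed
  moreover have "x \<noteq> z" using "3.prems"[rule_format, of 0] by simp
  ultimately show ?case using "3.IH"(2) by simp
qed auto

lemma adj_big: assumes y: "y \<in> seqs q m" and k: "Suc k < m" and eq: "y ! k = y ! Suc k"
  shows "\<exists>x\<in>seqs q (Suc m). 3 \<le> card (JJ y x)"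
proof -
  have ly: "length y = m" and sy: "set y \<subseteq> {..<q}" using y by (auto simp: seqs_def)
  define x where "x = ins k (y ! k) y"
  have lx: "length x = Suc m" using k ly by (simp add: x_def length_ins)
  have "y ! k \<in> set y" using k ly by simp
  then have "set x \<subseteq> {..<q}" using set_ins[of k "y ! k" y] sy by (auto simp: x_def)
  then have xs: "x \<in> seqs q (Suc m)" using lx by (simp add: seqs_def)
  have x0: "x ! k = y ! k" using nth_ins[of k y k "y ! k"] k ly by (simp add: x_def)
  have x1: "x ! Suc k = y ! k" using nth_ins[of k y "Suc k" "y ! k"] k ly by (simp add: x_def)
  have x2: "x ! Suc (Suc k) = y ! k" using nth_ins[of k y "Suc (Suc k)" "y ! k"] k ly eq by (simp add: x_def)
  have d0: "dl k x = y" using k ly by (simp add: x_def dl_ins)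
  have d1: "dl k x = dl (Suc k) x"
  proof (rule dl_eq_if)
    show "\<forall>p. k \<le> p \<and> p < Suc k \<longrightarrow> x ! p = x ! Suc p"
    proof (intro allI impI)
      fix p assume "k \<le> p \<and> p < Suc k"
      then have "p = k" by auto
      then show "x ! p = x ! Suc p" using x0 x1 by auto
    qed
  qed (use k lx in auto)
  have d2: "dl k x = dl (Suc (Suc k)) x"
  proof (rule dl_eq_if)
    show "\<forall>p. k \<le> p \<and> p < Suc (Suc k) \<longrightarrow> x ! p = x ! Suc p"
    proof (intro allI impI)
      fix p assume "k \<le> p \<and> p < Suc (Suc k)"
      then have "p = k \<or> p = Suc k" by auto
      then show "x ! p = x ! Suc p" using x0 x1 x2 by auto
    qed
  qed (use k lx in auto)
  have "{k, Suc k, Suc (Suc k)} \<subseteq> JJ y x" using d0 d1 d2 k lx by (auto simp: JJ_def)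
  moreover have "finite (JJ y x)" by (auto simp: JJ_def)
  ultimately have "card {k, Suc k, Suc (Suc k)} \<le> card (JJ y x)" by (rule card_mono[rotated])
  then have "3 \<le> card (JJ y x)" by simp
  then show ?thesis using xs by blast
qed

lemma noadj_small: assumes na: "\<forall>k. Suc k < length y \<longrightarrow> y ! k \<noteq> y ! Suc k"
  and lx: "length x = Suc (length y)"
  shows "card (JJ y x) \<le> 2"
proof (rule ccontr)
  assume c: "\<not> card (JJ y x) \<le> 2"
  then have ne: "JJ y x \<noteq> {}" by auto
  let ?a = "Min (JJ y x)" and ?b = "Max (JJ y x)"
  have J: "JJ y x = {?a..?b}" using JJ_interval[OF ne] .
  have "card (JJ y x) = Suc ?b - ?a" by (subst J) simp
  then have ab: "?a + 2 \<le> ?b" using c by simp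
  have fin: "finite (JJ y x)" by (auto simp: JJ_def)
  have bJ: "?b \<in> JJ y x" and aJ: "?a \<in> JJ y x" using fin ne by auto
  then have bl: "?b < length x" and da: "dl ?a x = y" and db: "dl ?b x = y" by (auto simp: JJ_def)
  have e1: "x ! Suc ?a = x ! Suc (Suc ?a)"
    using dl_eq_imp[of ?a ?b x "Suc ?a"] ab bl da db by simp
  have y0: "y ! ?a = x ! Suc ?a" using nth_dl[of ?a x ?a] da ab bl by simp
  have y1: "y ! Suc ?a = x ! Suc (Suc ?a)" using nth_dl[of ?a x "Suc ?a"] da ab bl by simp
  have "Suc ?a < length y" using ab bl lx by simp
  then show False using na y0 y1 e1 by auto
qed


lemma aux_alg: "(a / (N::real)) * (b - c) = a * b / N - c * (a / N)"
  by (simp add: right_diff_distrib diff_divide_distrib)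

lemma entropy_formula:
  assumes y: "y \<in> seqs q m" and q: "q \<ge> 1"
  shows "input_entropy q (Suc m) 1 y = log 2 (real (Suc m) * real q)
     - (\<Sum>x\<in>seqs q (Suc m). real (card (JJ y x)) * log 2 (real (card (JJ y x)))) / (real (Suc m) * real q)"
proof -
  let ?n = "Suc m"
  let ?N = "real ?n * real q"
  let ?E = "\<lambda>x. card (JJ y x)"
  have ly: "length y = m" using y by (simp add: seqs_def)
  have Npos: "?N > 0" using q by simp
  have embE: "emb y x = ?E x" if "x \<in> seqs q ?n" for x
    using that ly emb_eq[of x y] by (simp add: seqs_def)
  have sumdp: "(\<Sum>x'\<in>seqs q ?n. del_prob ?n 1 y x') = real q"
  proof -
    have "(\<Sum>x'\<in>seqs q ?n. del_prob ?n 1 y x') = (\<Sum>x'\<in>seqs q ?n. real (?E x') / real ?n)"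
      by (rule sum.cong) (auto simp: del_prob_def embE)
    also have "\<dots> = real (\<Sum>x'\<in>seqs q ?n. ?E x') / real ?n"
      by (simp add: sum_divide_distrib)
    also have "\<dots> = real q"
    proof -
      have "real (\<Sum>x'\<in>seqs q ?n. ?E x') = real ?n * real q" using sum_JJ[OF y] by (simp add: algebra_simps)
      then show ?thesis by simp
    qed
    finally show ?thesis .
  qed
  have post: "posterior q ?n 1 y x = real (?E x) / ?N" if "x \<in> seqs q ?n" for x
  proof -
    have "posterior q ?n 1 y x = del_prob ?n 1 y x / real q" by (simp only: posterior_def sumdp)
    then show ?thesis using that by (simp add: del_prob_def embE)
  qed
  have trm: "(if posterior q ?n 1 y x = 0 then 0 else posterior q ?n 1 y x * log 2 (posterior q ?n 1 y x))
     = real (?E x) * log 2 (real (?E x)) / ?N - log 2 ?N * (real (?E x) / ?N)"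
    if "x \<in> seqs q ?n" for x
  proof (cases "?E x = 0")
    case True then show ?thesis using that post by simp
  next
    case False
    then have "posterior q ?n 1 y x \<noteq> 0" using that post Npos q by simp
    moreover have "log 2 (real (?E x) / ?N) = log 2 (real (?E x)) - log 2 ?N"
      using False Npos q by (simp add: log_divide)
    moreover have "posterior q ?n 1 y x * log 2 (posterior q ?n 1 y x)
       = (real (?E x) / ?N) * (log 2 (real (?E x)) - log 2 ?N)"
      using that post calculation(2) by simp
    moreover have "(real (?E x) / ?N) * (log 2 (real (?E x)) - log 2 ?N)
       = real (?E x) * log 2 (real (?E x)) / ?N - log 2 ?N * (real (?E x) / ?N)"
      by (rule aux_alg)
    ultimately show ?thesis by simp
  qed
  have "input_entropy q ?n 1 y = - (\<Sum>x\<in>seqs q ?n. real (?E x) * log 2 (real (?E x)) / ?N - log 2 ?N * (real (?E x) / ?N))"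
    unfolding input_entropy_def by (intro arg_cong[where f=uminus] sum.cong refl trm)
  also have "\<dots> = - ((\<Sum>x\<in>seqs q ?n. real (?E x) * log 2 (real (?E x))) / ?N - log 2 ?N * (real (\<Sum>x\<in>seqs q ?n. ?E x) / ?N))"
    by (simp add: sum_subtractf sum_divide_distrib sum_distrib_left)
  also have "real (\<Sum>x\<in>seqs q ?n. ?E x) / ?N = 1"
  proof -
    have "real (\<Sum>x\<in>seqs q ?n. ?E x) = ?N" using sum_JJ[OF y] by (simp add: algebra_simps)
    then show ?thesis using Npos q by simp
  qed
  finally show ?thesis by simp
qed


theorem theorem5:
  fixes q n m :: nat
  assumes "q \<ge> 2" and "n \<ge> 2" and "m = n - 1"
  shows "Max (input_entropy q n 1 ` seqs q m) = log 2 (real n * real q) - 2 * real m / (real n * real q)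
       \<and> (\<forall>y\<in>seqs q m. input_entropy q n 1 y = Max (input_entropy q n 1 ` seqs q m) \<longrightarrow> runs y = m)"
proof -
  have nS: "n = Suc m" using assms by simp
  have q1: "q \<ge> 1" using assms by simp
  define H where "H = input_entropy q n 1"
  define V where "V = log 2 (real n * real q) - 2 * real m / (real n * real q)"
  define S where "S y = (\<Sum>x\<in>seqs q n. real (card (JJ y x)) * log 2 (real (card (JJ y x))))" for y
  have Npos: "real n * real q > 0" using nS q1 by simp
  have HS: "H y = log 2 (real n * real q) - S y / (real n * real q)" if "y \<in> seqs q m" for y
    using entropy_formula[OF that q1] nS by (simp add: H_def S_def)
  have Slow: "2 * real m \<le> S y" if y: "y \<in> seqs q m" for y
  proof -
    have "2 * real m = 2 * real (\<Sum>x\<in>seqs q n. card (KK y x))" using sum_KK[OF y] nS by simp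
    also have "\<dots> = (\<Sum>x\<in>seqs q n. 2 * real (card (JJ y x) - 1))"
      by (simp add: card_KK sum_distrib_left)
    also have "\<dots> \<le> S y" unfolding S_def by (rule sum_mono) (rule elog)
    finally show ?thesis .
  qed
  have le: "H y \<le> V" if y: "y \<in> seqs q m" for y
  proof -
    have "2 * real m / (real n * real q) \<le> S y / (real n * real q)"
      using Slow[OF y] Npos by (simp add: divide_right_mono)
    then show ?thesis using HS[OF y] by (simp add: V_def)
  qed
  have Seq: "S y = 2 * real m" if y: "y \<in> seqs q m" and na: "\<forall>k. Suc k < length y \<longrightarrow> y ! k \<noteq> y ! Suc k" for y
  proof -
    have ly: "length y = m" using y by (simp add: seqs_def)
    have "S y = (\<Sum>x\<in>seqs q n. 2 * real (card (JJ y x) - 1))" unfolding S_def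
    proof (rule sum.cong[OF refl])
      fix x assume "x \<in> seqs q n"
      then have "length x = Suc (length y)" using ly nS by (simp add: seqs_def)
      then have "card (JJ y x) \<le> 2" using noadj_small[OF na] by simp
      then show "real (card (JJ y x)) * log 2 (real (card (JJ y x))) = 2 * real (card (JJ y x) - 1)"
        using elog_small by simp
    qed
    also have "\<dots> = 2 * real (\<Sum>x\<in>seqs q n. card (KK y x))"
      by (simp add: card_KK sum_distrib_left)
    also have "\<dots> = 2 * real m" using sum_KK[OF y] nS by simp
    finally show ?thesis .
  qed
  define y0 where "y0 = map (\<lambda>i. i mod 2) [0..<m]"
  have y0s: "y0 \<in> seqs q m" using assms(1) by (auto simp: y0_def seqs_def)
  have y0na: "\<forall>k. Suc k < length y0 \<longrightarrow> y0 ! k \<noteq> y0 ! Suc k"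
    by (auto simp: y0_def nth_append mod_Suc)
  have HV: "H y0 = V" using HS[OF y0s] Seq[OF y0s y0na] by (simp add: V_def)
  have finH: "finite (H ` seqs q m)" using finite_seqs by simp
  have MaxV: "Max (H ` seqs q m) = V"
    by (rule Max_eqI[OF finH]) (use le HV y0s in auto)
  have runs: "runs y = m" if y: "y \<in> seqs q m" and hy: "H y = V" for y
  proof -
    have ly: "length y = m" using y by (simp add: seqs_def)
    have SV: "S y = 2 * real m" using HS[OF y] hy Npos nS q1 by (simp add: V_def)
    have na: "\<forall>k. Suc k < length y \<longrightarrow> y ! k \<noteq> y ! Suc k"
    proof (rule ccontr)
      assume "\<not> ?thesis"
      then obtain k where k: "Suc k < m" "y ! k = y ! Suc k" using ly by auto
      obtain x0 where x0: "x0 \<in> seqs q n" "3 \<le> card (JJ y x0)" using adj_big[OF y k] nS by auto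
      have "(\<Sum>x\<in>seqs q n. 2 * real (card (JJ y x) - 1)) < S y" unfolding S_def
      proof (rule sum_strict_mono_ex1[OF finite_seqs])
        show "\<forall>x\<in>seqs q n. 2 * real (card (JJ y x) - 1) \<le> real (card (JJ y x)) * log 2 (real (card (JJ y x)))"
          using elog by blast
        show "\<exists>x\<in>seqs q n. 2 * real (card (JJ y x) - 1) < real (card (JJ y x)) * log 2 (real (card (JJ y x)))"
          using elog_strict[OF x0(2)] x0(1) by blast
      qed
      moreover have "(\<Sum>x\<in>seqs q n. 2 * real (card (JJ y x) - 1)) = 2 * real m"
      proof -
        have "(\<Sum>x\<in>seqs q n. 2 * real (card (JJ y x) - 1)) = 2 * real (\<Sum>x\<in>seqs q n. card (KK y x))"
          by (simp add: card_KK sum_distrib_left)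
        also have "\<dots> = 2 * real m" using sum_KK[OF y] nS by simp
        finally show ?thesis .
      qed
      ultimately show False using SV by simp
    qed
    then show ?thesis using remdups_adj_noadj[OF na] ly by (simp add: runs_def)
  qed
  show ?thesis using MaxV runs unfolding H_def V_def by auto
qed

end
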